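(* For any $s\in(0,1]$ there exists a $(\rho(s),\chi(s))$-bidding profile, where \[ \rho(s):=\frac{e^s}{s},\qquad \chi(s):=\begin{cases}(e^s-1)/s, & 0<s\le\ln 2,\\ \xi(s)/s, & \ln2\le s\le 1,\end{cases} \] and $\xi(s)$ is the unique solution $\xi\in[1,e]$ of $\xi(2-\ln\xi)=e^s$ for $s\in[\ln 2,1]$.
   Context: Given $1<\chi\le\rho$, a $(\rho,\chi)$-bidding profile is a non-decreasing, left-continuous function $G:\mathbb{R}\to(0,\infty)$ such that (offset) $G(x)<1$ for every $x<0$ and $G(x)\ge1$ for every $x>0$; (robustness) $\int_{-\infty}^{x+1}G(t)\,\mathrm{d} t\le\rho\,G(x)$ for every $x\in\mathbb{R}$; (consistency) $\int_{-\infty}^{1}G(t)\,\mathrm{d} t\le\chi$. *)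

theory Defs
  imports "HOL-Analysis.Analysis"
begin

text \<open>Improper integrals of the
positive function G over (-infinity, a] are taken as nonnegative Lebesgue integrals
(values in ennreal, possibly infinite), so each integral inequality also asserts finiteness.\<close>

definition bidding_profile :: "real \<Rightarrow> real \<Rightarrow> (real \<Rightarrow> real) \<Rightarrow> bool" where
  "bidding_profile rho chi G \<longleftrightarrow>
     1 < chi \<and> chi \<le> rho \<and>
     mono G \<and>
     (\<forall>x. continuous (at_left x) G) \<and>
     (\<forall>x. 0 < G x) \<and>
     (\<forall>x<0. G x < 1) \<and>
     (\<forall>x>0. 1 \<le> G x) \<and>
     (\<forall>x. (\<integral>\<^sup>+ t. ennreal (G t) * indicator {..x+1} t \<partial>lborel) \<le> ennreal (rho * G x)) \<and>
     (\<integral>\<^sup>+ t. ennreal (G t) * indicator {..1} t \<partial>lborel) \<le> ennreal chi"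

definition rho_s :: "real \<Rightarrow> real" where
  "rho_s s = exp s / s"

definition xi_s :: "real \<Rightarrow> real" where
  "xi_s s = (THE \<xi>. \<xi> \<in> {1..exp 1} \<and> \<xi> * (2 - ln \<xi>) = exp s)"

definition chi_s :: "real \<Rightarrow> real" where
  "chi_s s = (if s \<le> ln 2 then (exp s - 1) / s else xi_s s / s)"

end

theory Submission
  imports Defs
begin

locale prof =
  fixes s a J :: real
  assumes s0: "0 < s" and s1: "s \<le> 1" and a0: "0 \<le> a" and a1: "a \<le> 1"
    and J0: "0 < J"
    and Jeq: "J = exp s / s - 2 * exp (s*(1-a)) / s - a + 1/s + exp (s*(1-a)) * (1-a)"
    and Jle: "J + a \<le> 1/s"
begin

definition c where "c = s * exp (-s)"

definition H :: "real \<Rightarrow> real" where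
  "H x = (if x \<le> a then x else a + (exp (s*(x-a)) - 1)/s)"

primrec p :: "nat \<Rightarrow> real \<Rightarrow> real" where
  "p 0 = (\<lambda>u. J + H u)"
| "p (Suc k) = (\<lambda>u. p k 0 - c * integral {0..1} (p k) + c * integral {0..u} (p k))"

declare p.simps[simp del]
lemma p0: "p 0 u = J + H u" by (simp add: p.simps)
lemma pS: "p (Suc k) u = p k 0 - c * integral {0..1} (p k) + c * integral {0..u} (p k)" by (simp add: p.simps)

lemma c_pos: "0 < c" using s0 by (simp add: c_def)

lemma H_cont: "continuous_on S H"
proof -
  have "continuous_on S (\<lambda>x. if x \<le> a then x else a + (exp (s*(x-a)) - 1)/s)"
    using s0 by (intro continuous_on_cases_le) (auto intro!: continuous_intros)
  then show ?thesis unfolding H_def[abs_def] .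
qed

lemma p_cont: "continuous_on {0..1} (p k)"
proof (induction k)
  case 0
  then show ?case using H_cont by (auto simp: p.simps intro!: continuous_intros)
next
  case (Suc k)
  have "continuous_on {0..1} (\<lambda>u. integral {0..u} (p k))"
    using integral_has_vector_derivative[OF Suc]
    by (meson continuous_on_vector_derivative)
  then show ?case by (auto simp: p.simps intro!: continuous_intros)
qed

lemma p_deriv: "u \<in> {0..1} \<Longrightarrow> (p (Suc k) has_real_derivative c * p k u) (at u within {0..1})"
  using integral_has_real_derivative[OF p_cont, of u k]
  by (auto simp: p.simps intro!: derivative_eq_intros)

lemma p_Suc_1: "p (Suc k) 1 = p k 0" by (simp add: pS)

definition A :: "nat \<Rightarrow> real" where
  "A k = integral {0..1} (\<lambda>v. exp (-s * v) * p k v)"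

lemma A_int: "((\<lambda>v. exp (-s * v) * p k v) has_integral A k) {0..1}"
  unfolding A_def
  by (intro integrable_integral integrable_continuous_interval continuous_intros p_cont)

lemma q_step: "p (Suc k) 0 - s * A (Suc k) = exp (-s) * (p k 0 - s * A k)"
proof -
  have d: "((\<lambda>v. exp (-s * v) * p (Suc k) v) has_vector_derivative
            (-s * (exp (-s * v) * p (Suc k) v) + c * (exp (-s * v) * p k v))) (at v within {0..1})"
    if "v \<in> {0..1}" for v
  proof -
    have e: "((\<lambda>v. exp (-s * v)) has_real_derivative (-s * exp (-s * v))) (at v within {0..1})"
      by (auto intro!: derivative_eq_intros)
    have "((\<lambda>v. exp (-s * v) * p (Suc k) v) has_real_derivative
            (-s * (exp (-s * v) * p (Suc k) v) + c * (exp (-s * v) * p k v))) (at v within {0..1})"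
      by (rule DERIV_cong[OF DERIV_mult[OF e p_deriv[OF that, of k]]]) (simp add: algebra_simps)
    then show ?thesis by (simp add: has_real_derivative_iff_has_vector_derivative)
  qed
  have "((\<lambda>v. -s * (exp (-s * v) * p (Suc k) v) + c * (exp (-s * v) * p k v)) has_integral
        (exp (-s*1) * p (Suc k) 1 - exp (-s*0) * p (Suc k) 0)) {0..1}"
    by (rule fundamental_theorem_of_calculus[OF _ d]) auto
  moreover have "((\<lambda>v. -s * (exp (-s * v) * p (Suc k) v) + c * (exp (-s * v) * p k v)) has_integral
        (-s * A (Suc k) + c * A k)) {0..1}"
    by (intro has_integral_add has_integral_mult_right A_int)
  ultimately have "-s * A (Suc k) + c * A k = exp (-s*1) * p (Suc k) 1 - exp (-s*0) * p (Suc k) 0"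
    by (rule has_integral_unique[rotated])
  then have "-s * A (Suc k) + c * A k = exp (-s) * p k 0 - p (Suc k) 0"
    by (simp only: p_Suc_1) simp
  then show ?thesis unfolding c_def by (simp add: algebra_simps)
qed

lemma H_le: "x \<le> a \<Longrightarrow> H x = x" by (simp add: H_def)
lemma H_ge: "a \<le> x \<Longrightarrow> H x = a + (exp (s*(x-a)) - 1)/s" by (auto simp: H_def)

lemma A0: "A 0 = J / s"
proof -
  define F1 where "F1 v = - exp (-s * v) * (J + v) / s - exp (-s * v) / s^2" for v
  define F2 where "F2 v = - exp (-s * v) * (J + a - 1/s) / s + v * exp (-s*a) / s" for v
  have d1: "(F1 has_vector_derivative (exp (-s * v) * p 0 v)) (at v within {0..a})"
    if "v \<in> {0..a}" for v
  proof -
    have "(F1 has_real_derivative (exp (-s * v) * (J + v))) (at v within {0..a})"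
      unfolding F1_def[abs_def] using s0
      by (auto intro!: derivative_eq_intros simp: field_simps power2_eq_square)
    then show ?thesis using that H_le[of v]
      by (simp add: has_real_derivative_iff_has_vector_derivative p0)
  qed
  have d2: "(F2 has_vector_derivative (exp (-s * v) * p 0 v)) (at v within {a..1})"
    if "v \<in> {a..1}" for v
  proof -
    have e: "exp (-s * v) * exp (s*(v-a)) = exp (-s*a)"
      by (simp add: exp_add[symmetric] algebra_simps)
    have "exp (-s * v) * p 0 v = exp (-s * v) * (J + a - 1/s) + (exp (-s * v) * exp (s*(v-a))) / s"
    proof -
      have hv: "H v = a + (exp (s*(v-a)) - 1)/s" using that by (intro H_ge) auto
      show ?thesis unfolding p0 hv using s0 by (simp add: field_simps)
    qed
    then have "exp (-s * v) * p 0 v = exp (-s * v) * (J + a - 1/s) + exp (-s*a) / s"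
      by (simp only: e)
    moreover have "(F2 has_real_derivative (exp (-s * v) * (J + a - 1/s) + exp (-s*a) / s)) (at v within {a..1})"
      unfolding F2_def[abs_def] using s0
      by (auto intro!: derivative_eq_intros simp: field_simps)
    ultimately show ?thesis
      by (simp add: has_real_derivative_iff_has_vector_derivative)
  qed
  have i1: "((\<lambda>v. exp (-s * v) * p 0 v) has_integral (F1 a - F1 0)) {0..a}"
    by (rule fundamental_theorem_of_calculus[OF a0 d1])
  have i2: "((\<lambda>v. exp (-s * v) * p 0 v) has_integral (F2 1 - F2 a)) {a..1}"
    by (rule fundamental_theorem_of_calculus[OF a1 d2])
  have "((\<lambda>v. exp (-s * v) * p 0 v) has_integral (F1 a - F1 0 + (F2 1 - F2 a))) {0..1}"
    by (rule has_integral_combine[OF a0 a1 i1 i2])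
  then have eq: "A 0 = F1 a - F1 0 + (F2 1 - F2 a)"
    using A_int has_integral_unique by blast
  define E where "E = exp (-s*a)"
  define e1 where "e1 = exp (-s)"
  define X where "X = exp s"
  have ex: "exp (s*(1-a)) = X * E" unfolding X_def E_def by (simp add: exp_add[symmetric] algebra_simps)
  have ex2: "X * e1 = 1" unfolding X_def e1_def by (simp add: exp_add[symmetric])
  have F1a: "F1 a = - E * (J + a) / s - E / s^2" unfolding F1_def E_def by simp
  have F10: "F1 0 = - J / s - 1 / s^2" unfolding F1_def by simp
  have F21: "F2 1 = - e1 * (J + a - 1/s) / s + E / s" unfolding F2_def E_def e1_def by simp
  have F2a: "F2 a = - E * (J + a - 1/s) / s + a * E / s" unfolding F2_def E_def by simp
  have key0: "X * (-2*E + 1 - s * e1 * (J + a - 1/s) + s * E * (1-a)) = 0"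
  proof -
    have "X * (-2*E + 1 - s * e1 * (J + a - 1/s) + s * E * (1-a))
          = -2*(X*E) + X - s * (X*e1) * (J + a - 1/s) + s * (X*E) * (1-a)"
      by (simp add: algebra_simps)
    also have "\<dots> = -2*(X*E) + X - s * (J + a - 1/s) + s * (X*E) * (1-a)"
      using ex2 by simp
    also have "\<dots> = 0"
    proof -
      have Jeq': "J = X/s - 2*(X*E)/s - a + 1/s + (X*E)*(1-a)" using Jeq ex X_def by simp
      show ?thesis unfolding Jeq' using s0 by (simp add: field_simps)
    qed
    finally show ?thesis .
  qed
  have X0: "X \<noteq> 0" unfolding X_def by simp
  have key: "-2*E + 1 - s * e1 * (J + a - 1/s) + s * E * (1-a) = 0"
    using key0 X0 by simp
  have "F1 a - F1 0 + (F2 1 - F2 a) = J / s + (-2*E + 1 - s * e1 * (J + a - 1/s) + s * E * (1-a)) / s^2"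
    unfolding F1a F10 F21 F2a using s0 by (simp add: field_simps power2_eq_square)
  then show ?thesis unfolding eq key by simp
qed

lemma q_zero: "p k 0 = s * A k"
proof (induction k)
  case 0
  then show ?case using A0 s0 H_le[OF a0] by (simp add: p0)
next
  case (Suc k)
  then show ?case using q_step[of k] by simp
qed


lemma H_mono: "mono H"
proof (rule monoI)
  fix x y :: real assume xy: "x \<le> y"
  show "H x \<le> H y"
  proof (cases "y \<le> a")
    case True then show ?thesis using xy by (simp add: H_def)
  next
    case False
    then have hy: "H y = a + (exp (s*(y-a)) - 1)/s" by (simp add: H_def)
    show ?thesis
    proof (cases "x \<le> a")
      case True
      have "exp (s*(y-a)) \<ge> 1" using False s0 by simp
      then have "0 \<le> (exp (s*(y-a)) - 1)/s" using s0 by simp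
      then show ?thesis using True hy s0 by (simp add: H_def)
    next
      case False
      then have "exp (s*(x-a)) \<le> exp (s*(y-a))" using xy s0 by (simp add: mult_left_mono)
      then show ?thesis using False hy s0 by (simp add: H_def divide_right_mono)
    qed
  qed
qed

lemma p_int: "p k integrable_on {0..u}" if "u \<in> {0..1}"
  using p_cont[of k] that
  by (intro integrable_continuous_interval) (auto elim: continuous_on_subset)

lemma pS': "p (Suc k) u = p (Suc k) 0 + c * integral {0..u} (p k)"
  by (simp add: pS)

lemma int_exp: "((\<lambda>v. exp (-s * v)) has_integral ((1 - exp (-s)) / s)) {0..1}"
proof -
  have "((\<lambda>v. exp (-s * v)) has_integral ((- exp (-s*1) / s) - (- exp (-s*0) / s))) {0..1}"
    by (rule fundamental_theorem_of_calculus)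
       (use s0 in \<open>auto intro!: derivative_eq_intros simp: has_real_derivative_iff_has_vector_derivative[symmetric]\<close>)
  then show ?thesis by (simp add: diff_divide_distrib)
qed

lemma int_id: "((\<lambda>v::real. v) has_integral (1/2)) {0..1}"
proof -
  have "((\<lambda>v::real. v) has_integral (1^2/2 - 0^2/2)) {0..1}"
    by (rule fundamental_theorem_of_calculus)
       (auto intro!: derivative_eq_intros simp: has_real_derivative_iff_has_vector_derivative[symmetric])
  then show ?thesis by simp
qed

lemma p_pos_mono: "0 < p k 0 \<and> mono_on {0..1} (p k)"
proof (induction k)
  case 0
  have "0 < p 0 0" using J0 H_le[OF a0] by (simp add: p0)
  moreover have "mono_on {0..1} (p 0)"
  proof (rule mono_onI)
    fix x y :: real assume "x \<in> {0..1}" "y \<in> {0..1}" "x \<le> y"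
    have "H x \<le> H y" using \<open>x \<le> y\<close> by (rule monoD[OF H_mono])
    then show "p 0 x \<le> p 0 y" by (simp add: p0)
  qed
  ultimately show ?case by simp
next
  case (Suc k)
  then have pk0: "0 < p k 0" and mk: "mono_on {0..1} (p k)" by auto
  have ge0: "p k u \<ge> p k 0" if "u \<in> {0..1}" for u
    using mk that by (auto simp: mono_on_def)
  have lb: "integral {0..u} (p k) \<ge> u * p k 0" if "u \<in> {0..1}" for u
  proof -
    have "integral {0..u} (\<lambda>_. p k 0) \<le> integral {0..u} (p k)"
      using that ge0 by (intro integral_le p_int) auto
    then show ?thesis using that by simp
  qed
  have mono: "mono_on {0..1} (p (Suc k))"
  proof (rule mono_onI)
    fix u v :: real assume uv: "u \<in> {0..1}" "v \<in> {0..1}" "u \<le> v"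
    have "integral {0..u} (p k) + integral {u..v} (p k) = integral {0..v} (p k)"
      by (rule Henstock_Kurzweil_Integration.integral_combine) (use uv p_int[where u=v and k=k] in auto)
    moreover have "integral {u..v} (p k) \<ge> 0"
    proof (rule integral_nonneg)
      show "p k integrable_on {u..v}"
        using uv by (intro integrable_on_subinterval[OF p_int[where u=v]]) auto
      fix x assume "x \<in> {u..v}"
      then have "p k 0 \<le> p k x" using uv by (intro ge0) auto
      then show "0 \<le> p k x" using pk0 by simp
    qed
    ultimately show "p (Suc k) u \<le> p (Suc k) v"
      using c_pos by (subst (1 2) pS') (auto intro: mult_left_mono)
  qed
  define m where "m = p (Suc k) 0"
  define d where "d = c * p k 0"
  have d0: "0 < d" using c_pos pk0 by (simp add: d_def)
  have lbS: "p (Suc k) v \<ge> m + d * v" if "v \<in> {0..1}" for v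
  proof -
    have "c * (v * p k 0) \<le> c * integral {0..v} (p k)"
      using lb[OF that] c_pos by (intro mult_left_mono) auto
    then show ?thesis using pS'[of k v] unfolding m_def d_def by (simp add: algebra_simps)
  qed
  have iL: "((\<lambda>v. m * exp (-s * v) + (exp (-s) * d) * v) has_integral
          (m * ((1 - exp (-s)) / s) + (exp (-s) * d) * (1/2))) {0..1}"
    by (intro has_integral_add has_integral_mult_right int_exp int_id)
  have pw: "exp (-s * v) * p (Suc k) v \<ge> m * exp (-s * v) + (exp (-s) * d) * v"
    if "v \<in> {0..1}" for v
  proof -
    have "exp (-s) \<le> exp (-s * v)" using that s0 by (simp add: mult_left_le)
    then have "(exp (-s) * d) * v \<le> (exp (-s * v) * d) * v"
      using that d0 by (intro mult_right_mono) auto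
    moreover have "exp (-s * v) * (m + d * v) \<le> exp (-s * v) * p (Suc k) v"
      using lbS[OF that] by (intro mult_left_mono) auto
    ultimately show ?thesis by (simp add: algebra_simps)
  qed
  have "m * ((1 - exp (-s)) / s) + (exp (-s) * d) * (1/2) \<le> A (Suc k)"
    by (rule has_integral_le[OF iL A_int pw])
  then have "s * (m * ((1 - exp (-s)) / s) + (exp (-s) * d) * (1/2)) \<le> s * A (Suc k)"
    using s0 by (intro mult_left_mono) auto
  moreover have "s * A (Suc k) = m" using q_zero[of "Suc k"] unfolding m_def by simp
  moreover have "s * (m * ((1 - exp (-s)) / s) + (exp (-s) * d) * (1/2)) = m - exp (-s) * m + exp (-s) * (s * d / 2)"
    using s0 by (simp add: field_simps)
  ultimately have "exp (-s) * (s * d / 2) \<le> exp (-s) * m" by linarith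
  then have "s * d / 2 \<le> m" by simp
  moreover have "0 < s * d / 2" using s0 d0 by simp
  ultimately have "0 < m" by linarith
  then show ?case using mono unfolding m_def by simp
qed

lemma p_mono: "u \<in> {0..1} \<Longrightarrow> v \<in> {0..1} \<Longrightarrow> u \<le> v \<Longrightarrow> p k u \<le> p k v"
  using p_pos_mono[of k] by (blast intro: mono_onD)

lemma p_pos: "u \<in> {0..1} \<Longrightarrow> 0 < p k u"
proof -
  assume u: "u \<in> {0..1}"
  have "p k 0 \<le> p k u" using u by (intro p_mono) auto
  moreover have "0 < p k 0" using p_pos_mono[of k] by blast
  ultimately show ?thesis by linarith
qed

lemma p_le_J: "p k 0 \<le> J"
proof (induction k)
  case 0 then show ?case using H_le[OF a0] by (simp add: p0)
next
  case (Suc k)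
  have "p (Suc k) 0 \<le> p (Suc k) 1" by (rule p_mono) auto
  then show ?case using Suc p_Suc_1 by simp
qed


definition Phi :: "real \<Rightarrow> real" where
  "Phi x = (if 0 < x then J + H x else p (nat \<lceil>-x\<rceil>) (x + real (nat \<lceil>-x\<rceil>)))"

definition G :: "real \<Rightarrow> real" where
  "G x = (if x \<le> 0 then Phi (x+1) * c else max 1 (exp (s*(x-a))))"

lemma H0: "H 0 = 0" using H_le[OF a0] .

lemma Phi_gt0: "0 < x \<Longrightarrow> Phi x = J + H x" by (simp add: Phi_def)
lemma Phi_ge0: "0 \<le> x \<Longrightarrow> Phi x = J + H x"
  by (cases "x = 0") (auto simp: Phi_def H0 p0)

lemma Phi_piece:
  fixes k :: nat
  assumes "x \<in> {-(real k+1)..-real k}"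
  shows "Phi x = p (Suc k) (x + real k + 1)"
proof (cases "x = - real k")
  case True
  then have "nat \<lceil>-x\<rceil> = k" by simp
  then show ?thesis using True p_Suc_1[of k]
    by (cases "k = 0") (auto simp: Phi_def)
next
  case False
  then have x: "-(real k+1) \<le> x" "x < - real k" using assms by auto
  then have "\<lceil>-x\<rceil> = int k + 1" by (intro ceiling_unique) auto
  then have "nat \<lceil>-x\<rceil> = Suc k" by simp
  moreover have "\<not> 0 < x" using x by simp
  ultimately show ?thesis unfolding Phi_def by (simp add: algebra_simps)
qed

lemma Phi_shift:
  fixes k :: nat
  assumes "x \<in> {-(real k+1)..-real k}"
  shows "Phi (x+1) = p k (x + real k + 1)"
proof (cases k)
  case 0
  then show ?thesis using assms by (simp add: Phi_ge0 p0)
next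
  case (Suc j)
  then have "x + 1 \<in> {-(real j+1)..-real j}" using assms by auto
  from Phi_piece[OF this] show ?thesis using Suc by (simp add: algebra_simps)
qed

lemma piece_ex: "x \<le> 0 \<Longrightarrow> \<exists>k::nat. x \<in> {-(real k+1)..-real k}"
proof -
  assume x: "x \<le> 0"
  define k where "k = nat \<lfloor>-x\<rfloor>"
  have "real k = of_int \<lfloor>-x\<rfloor>" using x by (simp add: k_def)
  then have "x \<in> {-(real k+1)..-real k}"
  proof -
    have f1: "real_of_int \<lfloor>-x\<rfloor> \<le> -x" by (rule of_int_floor_le)
    have f2: "-x < real_of_int \<lfloor>-x\<rfloor> + 1" by (rule real_of_int_floor_add_one_gt)
    show ?thesis unfolding atLeastAtMost_iff using f1 f2 \<open>real k = of_int \<lfloor>-x\<rfloor>\<close> by linarith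
  qed
  then show ?thesis by blast
qed

lemma H_pos: "0 \<le> x \<Longrightarrow> 0 \<le> H x" using monoD[OF H_mono, of 0 x] H0 by simp

lemma Phi_pos: "0 < Phi x"
proof (cases "0 < x")
  case True then show ?thesis using J0 H_pos[of x] by (simp add: Phi_gt0)
next
  case False
  then obtain k :: nat where k: "x \<in> {-(real k+1)..-real k}" using piece_ex by force
  show ?thesis unfolding Phi_piece[OF k] by (rule p_pos) (use k in auto)
qed

lemma Phi_cont_piece: "continuous_on {-(real k+1)..-real k} Phi"
proof -
  have "continuous_on {-(real k+1)..-real k} (\<lambda>x. p (Suc k) (x + real k + 1))"
    by (rule continuous_on_compose2[OF p_cont[of "Suc k"]]) (auto intro!: continuous_intros)
  then show ?thesis by (rule continuous_on_eq) (simp add: Phi_piece)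
qed

lemma Phi_cont_pos: "continuous_on {0..} Phi"
proof -
  have "continuous_on {0..} (\<lambda>x. J + H x)" by (intro continuous_intros H_cont)
  then show ?thesis by (rule continuous_on_eq) (simp add: Phi_ge0)
qed

lemma Phi_cont_n: "continuous_on {-real n..} Phi"
proof (induction n)
  case 0 then show ?case using Phi_cont_pos by simp
next
  case (Suc n)
  have "{-real (Suc n)..} = {-(real n+1)..-real n} \<union> {-real n..}" by auto
  moreover have "continuous_on ({-(real n+1)..-real n} \<union> {-real n..}) Phi"
    by (intro continuous_on_closed_Un Phi_cont_piece Suc) auto
  ultimately show ?case by simp
qed

lemma Phi_isCont: "isCont Phi x"
proof -
  obtain n :: nat where n: "-x + 1 < real n" using reals_Archimedean2 by blast
  have "{-real n<..} \<subseteq> interior {-real n..}" by (intro interior_maximal) auto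
  then have "x \<in> interior {-real n..}" using n by auto
  then show ?thesis by (rule continuous_on_interior[OF Phi_cont_n])
qed

lemma Phi_cont: "continuous_on S Phi"
  using Phi_isCont by (simp add: continuous_at_imp_continuous_on)


lemma Phi_deriv:
  assumes xZ: "x \<notin> \<int>" and xa: "x \<noteq> a"
  shows "(Phi has_real_derivative G x) (at x)"
proof (cases "0 < x")
  case True
  show ?thesis
  proof (cases "x < a")
    case True
    have "((\<lambda>z. J + z) has_real_derivative 1) (at x)" by (auto intro!: derivative_eq_intros)
    then have "(Phi has_real_derivative 1) (at x)"
      by (rule has_field_derivative_transform_within_open[of _ _ _ "{0<..<a}"])
         (use \<open>0 < x\<close> True in \<open>auto simp: Phi_gt0 H_le\<close>)
    moreover have "G x = 1"
    proof -
      have "s*(x-a) < 0" using s0 True by (simp add: mult_pos_neg)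
      then show ?thesis using \<open>0 < x\<close> by (simp add: G_def max_def)
    qed
    ultimately show ?thesis by simp
  next
    case False
    then have xa': "a < x" using xa by simp
    have "((\<lambda>z. J + (a + (exp (s*(z-a)) - 1)/s)) has_real_derivative exp (s*(x-a))) (at x)"
      using s0 by (auto intro!: derivative_eq_intros)
    then have "(Phi has_real_derivative exp (s*(x-a))) (at x)"
      by (rule has_field_derivative_transform_within_open[of _ _ _ "{a<..}"])
         (use xa' a0 in \<open>auto simp: Phi_gt0 H_def\<close>)
    moreover have "G x = exp (s*(x-a))" using xa' \<open>0 < x\<close> s0 by (simp add: G_def max_def)
    ultimately show ?thesis by simp
  qed
next
  case False
  then obtain k :: nat where k: "x \<in> {-(real k+1)..-real k}" using piece_ex by force
  have "x \<noteq> -(real k+1)" "x \<noteq> -real k" using xZ by (auto simp del: of_nat_Suc)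
  then have k': "x \<in> {-(real k+1)<..<-real k}" using k by auto
  define u where "u = x + real k + 1"
  have u: "u \<in> {0<..<1}" using k' by (auto simp: u_def)
  have "{0<..<1::real} \<subseteq> interior {0..1}" by (intro interior_maximal) auto
  then have "u \<in> interior {0..1::real}" using u by blast
  then have atu: "at u within {0..1} = at u" by (rule at_within_interior)
  have "u \<in> {0..1}" using u by auto
  from p_deriv[OF this, of k] have dp: "(p (Suc k) has_real_derivative c * p k u) (at u)"
    unfolding atu .
  have dg: "((\<lambda>z. z + real k + 1) has_real_derivative 1) (at x)"
    by (auto intro!: derivative_eq_intros)
  from dp have dp': "(p (Suc k) has_real_derivative c * p k u) (at (x + real k + 1))"
    unfolding u_def .
  have ch: "((\<lambda>z. p (Suc k) (z + real k + 1)) has_real_derivative c * p k u * 1) (at x)"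
    by (rule DERIV_chain2[OF dp' dg])
  have eqS: "p (Suc k) (z + real k + 1) = Phi z" if "z \<in> {-(real k+1)<..<-real k}" for z
  proof -
    have "z \<in> {-(real k+1)..-real k}" using that by auto
    from Phi_piece[OF this] show ?thesis by simp
  qed
  have "(Phi has_real_derivative c * p k u * 1) (at x)"
    by (rule has_field_derivative_transform_within_open[OF ch _ k' eqS]) auto
  moreover have "G x = Phi (x+1) * c" using False by (simp add: G_def)
  moreover have "Phi (x+1) = p k u" using Phi_shift[OF k] by (simp add: u_def)
  ultimately show ?thesis by (simp add: mult.commute)
qed

lemma finite_ints: "finite {z::real. z \<in> {x..y} \<and> z \<in> \<int>}"
proof (rule finite_subset)
  show "{z::real. z \<in> {x..y} \<and> z \<in> \<int>} \<subseteq> of_int ` {\<lfloor>x\<rfloor>..\<lceil>y\<rceil>}"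
  proof
    fix z assume z: "z \<in> {z::real. z \<in> {x..y} \<and> z \<in> \<int>}"
    then obtain m where m: "z = of_int m" by (auto elim: Ints_cases)
    have "\<lfloor>x\<rfloor> \<le> m" using z m by (auto simp: floor_le_iff)
    moreover have "m \<le> \<lceil>y\<rceil>" using z m by (auto simp: le_ceiling_iff)
    ultimately show "z \<in> of_int ` {\<lfloor>x\<rfloor>..\<lceil>y\<rceil>}" using m by auto
  qed
qed auto

lemma G_int: "x \<le> y \<Longrightarrow> (G has_integral (Phi y - Phi x)) {x..y}"
proof -
  assume xy: "x \<le> y"
  let ?S = "{z::real. z \<in> {x..y} \<and> z \<in> \<int>} \<union> {a}"
  show ?thesis
  proof (rule fundamental_theorem_of_calculus_interior_strong[of ?S])
    show "finite ?S" using finite_ints by simp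
    show "x \<le> y" by (rule xy)
    show "continuous_on {x..y} Phi" by (rule Phi_cont)
    fix z assume "z \<in> {x<..<y} - ?S"
    then have "z \<notin> \<int>" "z \<noteq> a" by auto
    then show "(Phi has_vector_derivative G z) (at z)"
      using Phi_deriv by (simp add: has_real_derivative_iff_has_vector_derivative)
  qed
qed

lemma G_pos: "0 < G x"
  using Phi_pos[of "x+1"] c_pos by (auto simp: G_def)

lemma Phi_mono: "x \<le> y \<Longrightarrow> Phi x \<le> Phi y"
  using has_integral_nonneg[OF G_int, of x y] G_pos by (simp add: less_imp_le)


lemma rho_c: "(exp s / s) * c = 1"
  using s0 by (simp add: c_def exp_minus field_simps)

lemma H1: "H 1 = a + (exp (s*(1-a)) - 1)/s" using H_ge[OF a1] .

lemma Phi1_le: "Phi 1 \<le> exp s / s"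
proof -
  have "Phi 1 = J + a + (exp (s*(1-a)) - 1)/s" by (simp add: Phi_gt0 H1)
  also have "\<dots> \<le> 1/s + (exp (s*(1-a)) - 1)/s" using Jle by simp
  also have "\<dots> = exp (s*(1-a)) / s" using s0 by (simp add: field_simps)
  also have "\<dots> \<le> exp s / s"
    using s0 a0 by (intro divide_right_mono) (auto simp: mult_left_le)
  finally show ?thesis .
qed

lemma robust_pt: "Phi (x+1) \<le> (exp s / s) * G x"
proof (cases "x \<le> 0")
  case True
  then have eq: "(exp s / s) * G x = Phi (x+1) * ((exp s / s) * c)" by (simp add: G_def)
  show ?thesis unfolding eq rho_c by simp
next
  case False
  have e: "exp (s*(x+1-a)) = exp s * exp (s*(x-a))" by (simp add: exp_add[symmetric] algebra_simps)
  have "Phi (x+1) = J + a + (exp (s*(x+1-a)) - 1)/s"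
    using False a1 by (simp add: Phi_gt0 H_def)
  also have "\<dots> \<le> 1/s + (exp (s*(x+1-a)) - 1)/s" using Jle by simp
  also have "\<dots> = (exp s / s) * exp (s*(x-a))" using s0 e by (simp add: field_simps)
  also have "\<dots> \<le> (exp s / s) * G x"
    using False s0 by (intro mult_left_mono) (auto simp: G_def)
  finally show ?thesis .
qed

lemma G_mono: "mono G"
proof (rule monoI)
  fix x y :: real assume xy: "x \<le> y"
  show "G x \<le> G y"
  proof (cases "y \<le> 0")
    case True
    then show ?thesis using xy Phi_mono[of "x+1" "y+1"] c_pos by (simp add: G_def mult_right_mono)
  next
    case False
    show ?thesis
    proof (cases "x \<le> 0")
      case True
      have "G x = Phi (x+1) * c" using True by (simp add: G_def)
      also have "\<dots> \<le> Phi 1 * c" using True Phi_mono[of "x+1" 1] c_pos by (simp add: mult_right_mono)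
      also have "\<dots> \<le> (exp s / s) * c" by (rule mult_right_mono[OF Phi1_le]) (use c_pos in simp)
      also have "\<dots> = 1" by (rule rho_c)
      also have "1 \<le> G y" using False by (simp add: G_def)
      finally show ?thesis .
    next
      case False
      have e: "exp (s*(x-a)) \<le> exp (s*(y-a))" using xy s0 by (simp add: mult_left_mono)
      have gx: "G x = max 1 (exp (s*(x-a)))" using False by (simp add: G_def)
      have gy: "G y = max 1 (exp (s*(y-a)))" using \<open>\<not> y \<le> 0\<close> by (simp add: G_def)
      show ?thesis unfolding gx gy by (rule max.mono[OF order_refl e])
    qed
  qed
qed

lemma G_meas: "G \<in> borel_measurable lborel"
  using borel_measurable_mono[OF G_mono] by simp

lemma nn_le: "(\<integral>\<^sup>+ t. ennreal (G t) * indicator {..y} t \<partial>lborel) \<le> ennreal (Phi y)"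
proof -
  define f where "f n t = ennreal (G t) * indicator {-real n..y} t" for n :: nat and t
  have inc: "incseq f"
  proof (rule incseq_SucI, rule le_funI)
    fix n t show "f n t \<le> f (Suc n) t"
      unfolding f_def by (intro mult_left_mono) (auto simp: indicator_def)
  qed
  have meas: "f n \<in> borel_measurable lborel" for n
    unfolding f_def using G_meas by measurable
  have lim: "ennreal (G t) * indicator {..y} t = (SUP n. f n t)" for t
  proof (cases "t \<le> y")
    case True
    obtain n :: nat where n: "-t \<le> real n" using real_arch_simple by blast
    have "(SUP n. f n t) = ennreal (G t)"
    proof (rule antisym)
      show "(SUP n. f n t) \<le> ennreal (G t)"
        by (rule SUP_least) (auto simp: f_def indicator_def)
      have "f n t = ennreal (G t)" using n True by (auto simp: f_def indicator_def)
      then show "ennreal (G t) \<le> (SUP n. f n t)" by (metis SUP_upper UNIV_I)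
    qed
    then show ?thesis using True by simp
  next
    case False
    then show ?thesis by (simp add: f_def indicator_def)
  qed
  have each: "integral\<^sup>N lborel (f n) \<le> ennreal (Phi y)" for n
  proof (cases "-real n \<le> y")
    case True
    have "integral\<^sup>N lborel (f n) = ennreal (Phi y - Phi (-real n))"
      unfolding f_def
      by (rule nn_integral_has_integral_lebesgue'[OF _ G_int[OF True]]) (simp add: less_imp_le G_pos)
    also have "\<dots> \<le> ennreal (Phi y)" using Phi_pos[of "-real n"] by (intro ennreal_leI) simp
    finally show ?thesis .
  next
    case False
    then have "f n = (\<lambda>_. 0)" by (auto simp: f_def indicator_def fun_eq_iff)
    then show ?thesis by simp
  qed
  have "(\<integral>\<^sup>+ t. ennreal (G t) * indicator {..y} t \<partial>lborel) = (\<integral>\<^sup>+ t. (SUP n. f n t) \<partial>lborel)"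
    using lim by simp
  also have "\<dots> = (SUP n. integral\<^sup>N lborel (f n))"
    by (rule nn_integral_monotone_convergence_SUP[OF inc meas])
  also have "\<dots> \<le> ennreal (Phi y)" by (rule SUP_least) (rule each)
  finally show ?thesis .
qed

lemma H_lt1: "z < 1 \<Longrightarrow> H z < H 1"
proof -
  assume z: "z < 1"
  have H1ge: "1 \<le> H 1"
  proof -
    have "s*(1-a) \<le> exp (s*(1-a)) - 1" using exp_ge_add_one_self[of "s*(1-a)"] by linarith
    then have "1 - a \<le> (exp (s*(1-a)) - 1)/s" using s0 by (simp add: field_simps)
    then show ?thesis using H1 by simp
  qed
  show ?thesis
  proof (cases "z \<le> a")
    case True then show ?thesis using H_le[OF True] z H1ge by simp
  next
    case False
    have "exp (s*(z-a)) < exp (s*(1-a))" using z s0 by simp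
    then show ?thesis using False H1 s0 by (simp add: H_def divide_strict_right_mono)
  qed
qed

lemma profile:
  assumes "1 < chi" "chi \<le> exp s / s" "J + H 1 \<le> chi"
  shows "bidding_profile (exp s / s) chi G"
  unfolding bidding_profile_def
proof (intro conjI allI impI)
  show "1 < chi" "chi \<le> exp s / s" by (rule assms(1), rule assms(2))
  show "mono G" by (rule G_mono)
  show "0 < G x" for x by (rule G_pos)
  show "1 \<le> G x" if "0 < x" for x using that by (simp add: G_def)
  show "G x < 1" if "x < 0" for x
  proof -
    have "Phi (x+1) < Phi 1"
    proof (cases "0 < x + 1")
      case True
      then show ?thesis using H_lt1[of "x+1"] that by (simp add: Phi_gt0)
    next
      case False
      then have "Phi (x+1) \<le> Phi 0" by (intro Phi_mono) simp
      also have "\<dots> < Phi 1" using H_lt1[of 0] by (simp add: Phi_ge0)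
      finally show ?thesis .
    qed
    then have "Phi (x+1) * c < Phi 1 * c" using c_pos by simp
    also have "\<dots> \<le> (exp s / s) * c" using mult_right_mono[OF Phi1_le less_imp_le[OF c_pos]] by simp
    finally show ?thesis using that rho_c by (simp add: G_def)
  qed
  show "(\<integral>\<^sup>+ t. ennreal (G t) * indicator {..x+1} t \<partial>lborel) \<le> ennreal (exp s / s * G x)" for x
    using nn_le[of "x+1"] robust_pt[of x] by (meson ennreal_leI order_trans)
  show "(\<integral>\<^sup>+ t. ennreal (G t) * indicator {..1} t \<partial>lborel) \<le> ennreal chi"
    using nn_le[of 1] assms(3) by (metis Phi_gt0 ennreal_leI order_trans zero_less_one)
  show "continuous (at_left x) G" for x
  proof (cases "x \<le> 0")
    case True
    have ev: "\<forall>\<^sub>F z in at_left x. Phi (z+1) * c = G z"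
      using True by (auto simp: eventually_at_filter G_def)
    have "isCont (\<lambda>z. Phi (z+1) * c) x"
      by (intro continuous_intros isCont_o2[OF _ Phi_isCont])
    then have "continuous (at_left x) (\<lambda>z. Phi (z+1) * c)"
      by (rule continuous_at_imp_continuous_within)
    then have "((\<lambda>z. Phi (z+1) * c) \<longlongrightarrow> G x) (at_left x)"
      using True by (simp add: continuous_within G_def)
    then have "(G \<longlongrightarrow> G x) (at_left x)" by (rule tendsto_cong[THEN iffD1, rotated]) (rule ev)
    then show ?thesis by (simp add: continuous_within)
  next
    case False
    have ev: "\<forall>\<^sub>F z in nhds x. max 1 (exp (s*(z-a))) = G z"
      using False eventually_nhds_in_open[of "{0<..}" x] by (auto simp: G_def elim!: eventually_mono)
    have "isCont (\<lambda>z. max 1 (exp (s*(z-a)))) x" by (intro continuous_intros)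
    then have "isCont G x" using isCont_cong[OF ev] by simp
    then show ?thesis by (rule continuous_at_imp_continuous_within)
  qed
qed


end

lemma xi_ex1:
  fixes s :: real
  assumes "ln 2 \<le> s" "s \<le> 1"
  shows "\<exists>!\<xi>. \<xi> \<in> {1..exp 1} \<and> \<xi> * (2 - ln \<xi>) = exp s"
proof -
  define f where "f \<xi> = \<xi> * (2 - ln \<xi>)" for \<xi> :: real
  have cont: "continuous_on {1..exp 1} f"
    unfolding f_def by (intro continuous_intros) auto
  have e1: "1 \<le> exp (1::real)" by simp
  have f1: "f 1 \<le> exp s"
  proof -
    have "2 \<le> exp s" using exp_le_cancel_iff[of "ln 2" s] assms by simp
    then show ?thesis by (simp add: f_def)
  qed
  have fe: "exp s \<le> f (exp 1)" using assms by (simp add: f_def)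
  obtain x where x: "1 \<le> x" "x \<le> exp 1" "f x = exp s"
    using IVT'[of f 1 "exp s" "exp 1", OF f1 fe e1 cont] by blast
  have strict: "f u < f v" if uv: "1 \<le> u" "u < v" "v \<le> exp 1" for u v
  proof (rule DERIV_pos_imp_increasing_open[OF uv(2)])
    fix z assume z: "u < z" "z < v"
    then have z0: "0 < z" using uv by simp
    have "z < exp 1" using z uv by simp
    then have "ln z < 1" using ln_less_cancel_iff[of z "exp 1"] z0 by simp
    moreover have "DERIV f z :> (2 - ln z) + z * (- (1 / z))"
      unfolding f_def using z0 by (auto intro!: derivative_eq_intros)
    ultimately show "\<exists>y. DERIV f z :> y \<and> 0 < y" using z0 by (intro exI[of _ "(2 - ln z) + z * (- (1 / z))"]) simp
  next
    show "continuous_on {u..v} f" using uv by (intro continuous_on_subset[OF cont]) auto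
  qed
  show ?thesis
  proof (rule ex1I[of _ x])
    show "x \<in> {1..exp 1} \<and> x * (2 - ln x) = exp s" using x by (simp add: f_def)
    fix y assume y: "y \<in> {1..exp 1} \<and> y * (2 - ln y) = exp s"
    then have fy: "f y = exp s" by (simp add: f_def)
    show "y = x"
    proof (rule ccontr)
      assume "y \<noteq> x"
      then consider "y < x" | "x < y" by linarith
      then show False
      proof cases
        case 1 then show False using strict[of y x] y x fy by auto
      next
        case 2 then show False using strict[of x y] y x fy by auto
      qed
    qed
  qed
qed

theorem theorem2:
  fixes s :: real
  assumes "0 < s" and "s \<le> 1"
  shows "(ln 2 \<le> s \<longrightarrow> (\<exists>!\<xi>. \<xi> \<in> {1..exp 1} \<and> \<xi> * (2 - ln \<xi>) = exp s))
         \<and> (\<exists>G. bidding_profile (rho_s s) (chi_s s) G)"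
proof
  show "ln 2 \<le> s \<longrightarrow> (\<exists>!\<xi>. \<xi> \<in> {1..exp 1} \<and> \<xi> * (2 - ln \<xi>) = exp s)"
    using xi_ex1 assms(2) by blast
  have rho: "rho_s s = exp s / s" by (simp add: rho_s_def)
  show "\<exists>G. bidding_profile (rho_s s) (chi_s s) G"
  proof (cases "s \<le> ln 2")
    case True
    define J where "J = (exp s - 1 - s) / s"
    have chi: "chi_s s = (exp s - 1) / s" using True by (simp add: chi_s_def)
    have es: "1 + s + s^2/4 \<le> exp s"
    proof -
      have "1 + s/2 \<le> exp (s/2)" by (rule exp_ge_add_one_self)
      then have "(1 + s/2)^2 \<le> (exp (s/2))^2" using assms by (intro power_mono) auto
      also have "(exp (s/2))^2 = exp s" by (simp add: exp_double[symmetric])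
      finally show ?thesis by (simp add: power2_eq_square field_simps)
    qed
    have q: "0 < s^2/4" using assms by simp
    have "0 < exp s - 1 - s" using es q by linarith
    then have J0: "0 < J" unfolding J_def using assms by simp
    have e2: "exp s \<le> 2"
    proof -
      show ?thesis using exp_le_cancel_iff[of s "ln 2"] True by simp
    qed
    interpret P: prof s 1 J
    proof
      show "0 < s" "s \<le> 1" "0 \<le> (1::real)" "(1::real) \<le> 1" "0 < J" by (fact assms(1), fact assms(2), simp, simp, fact J0)
      show "J = exp s / s - 2 * exp (s * (1 - 1)) / s - 1 + 1 / s + exp (s * (1 - 1)) * (1 - 1)"
        unfolding J_def using assms by (simp add: field_simps)
      show "J + 1 \<le> 1 / s" unfolding J_def using assms e2 by (simp add: field_simps)
    qed
    have "bidding_profile (exp s / s) ((exp s - 1) / s) P.G"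
    proof (rule P.profile)
      show "1 < (exp s - 1) / s" using assms es by (simp add: field_simps power2_eq_square)
        (smt (verit) mult_pos_pos)
      show "(exp s - 1) / s \<le> exp s / s" using assms by (simp add: divide_right_mono)
      show "J + P.H 1 \<le> (exp s - 1) / s" using P.H_le[of 1] assms unfolding J_def by (simp add: field_simps)
    qed
    then show ?thesis unfolding rho chi by blast
  next
    case False
    define \<xi> where "\<xi> = xi_s s"
    have ex1: "\<exists>!\<xi>. \<xi> \<in> {1..exp 1} \<and> \<xi> * (2 - ln \<xi>) = exp s"
      using xi_ex1 False assms(2) by simp
    have xi: "\<xi> \<in> {1..exp 1}" "\<xi> * (2 - ln \<xi>) = exp s"
      using theI'[OF ex1] unfolding \<xi>_def xi_s_def by auto
    have chi: "chi_s s = \<xi> / s" using False by (simp add: chi_s_def \<xi>_def)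
    have x0: "0 < \<xi>" using xi by simp
    have lnle1: "ln \<xi> \<le> 1" using ln_le_cancel_iff[of \<xi> "exp 1"] xi x0 by simp
    have "\<xi> \<noteq> 1"
    proof
      assume "\<xi> = 1"
      then have "exp s = 2" using xi by simp
      moreover have "2 < exp s" using exp_less_cancel_iff[of "ln 2" s] False by simp
      ultimately show False by simp
    qed
    then have x1: "1 < \<xi>" using xi by simp
    then have lnpos: "0 < ln \<xi>" by simp
    have xle: "\<xi> \<le> exp s"
    proof -
      have "\<xi> * 1 \<le> \<xi> * (2 - ln \<xi>)" using lnle1 x0 by (intro mult_left_mono) auto
      then show ?thesis using xi by simp
    qed
    then have lnle: "ln \<xi> \<le> s" using ln_le_cancel_iff[of \<xi> "exp s"] x0 by simp
    define a where "a = 1 - ln \<xi> / s"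
    define J where "J = 1/s - a"
    have a0: "0 \<le> a" using lnle assms by (simp add: a_def field_simps)
    have a1: "a \<le> 1" using lnpos assms by (simp add: a_def)
    have sa: "s * (1 - a) = ln \<xi>" using assms by (simp add: a_def)
    have exa: "exp (s * (1 - a)) = \<xi>" using sa x0 by simp
    have J0: "0 < J" using assms lnpos by (simp add: J_def a_def field_simps)
    interpret P: prof s a J
    proof
      show "0 < s" "s \<le> 1" "0 \<le> a" "a \<le> 1" "0 < J" by (fact assms(1), fact assms(2), fact a0, fact a1, fact J0)
      show "J = exp s / s - 2 * exp (s * (1 - a)) / s - a + 1 / s + exp (s * (1 - a)) * (1 - a)"
      proof -
        have "1 - a = ln \<xi> / s" by (simp add: a_def)
        then have "exp s / s - 2 * exp (s * (1 - a)) / s - a + 1 / s + exp (s * (1 - a)) * (1 - a)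
              = (\<xi> * (2 - ln \<xi>)) / s - 2 * \<xi> / s - a + 1 / s + \<xi> * (ln \<xi> / s)"
          unfolding exa xi(2) by simp
        also have "\<dots> = 1/s - a" using assms by (simp add: field_simps)
        finally show ?thesis unfolding J_def by simp
      qed
      show "J + a \<le> 1 / s" by (simp add: J_def)
    qed
    have "bidding_profile (exp s / s) (\<xi> / s) P.G"
    proof (rule P.profile)
      show "1 < \<xi> / s" using x1 assms by (simp add: field_simps)
      show "\<xi> / s \<le> exp s / s" using xle assms by (simp add: divide_right_mono)
      show "J + P.H 1 \<le> \<xi> / s"
        using P.H1 exa assms by (simp add: J_def field_simps)
    qed
    then show ?thesis unfolding rho chi by blast
  qed
qed


end
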